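(* Let $m\ge2$, $n\ge1$ with $m(n-1)$ even, let $\mathcal{H}$ be the real $m^{\rm th}$-order $n$-dimensional Hankel tensor generated by ${\bf h}\in\mathbb{R}^{m(n-1)+1}$, and let $H$ be its associated Hankel matrix. Define the positive constant $c$ (depending on $m,n$) by $c=\min_{0\ne{\bf y}\in\mathbb{R}^n}\|{\bf y}^{\ast\frac m2}\|_2^2/\|{\bf y}\|_m^m$ if $m$ is even, and $c=\min_{0\ne{\bf y}\in\mathbb{R}^n}\|{\bf y}^{\ast\frac{m-1}2}\|_2^2/\|{\bf y}\|_{m-1}^{m-1}$ if $m$ is odd. If $H$ is positive semi-definite, then every H-eigenvalue $\lambda$ of $\mathcal{H}$ satisfies $\lambda\ge c\,\lambda_{\min}(H)$ (i.e. $\lambda_{\min}(\mathcal{H})\ge c\,\lambda_{\min}(H)$). If $H$ is negative semi-definite, then every H-eigenvalue $\lambda$ of $\mathcal{H}$ satisfies $\lambda\le c\,\lambda_{\max}(H)$ (i.e. $\lambda_{\max}(\mathcal{H})\le c\,\lambda_{\max}(H)$).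
   Context: The Hankel tensor generated by ${\bf h}=(h_0,\dots,h_{m(n-1)})$ has entries $\mathcal{H}_{i_1\dots i_m}=h_{i_1+\dots+i_m}$, $0\le i_j\le n-1$; its associated Hankel matrix is $H$ with $H_{ij}=h_{i+j}$, $0\le i,j\le m(n-1)/2$; $\lambda_{\min}(H),\lambda_{\max}(H)$ are its extreme eigenvalues. Convolution: for ${\bf u}\in\mathbb{R}^{n_1},{\bf v}\in\mathbb{R}^{n_2}$ (indexed from $0$), $({\bf u}\ast{\bf v})_j=\sum_{i=0}^j u_iv_{j-i}$ with out-of-range entries zero, and ${\bf y}^{\ast p}$ is the $p$-fold convolution of ${\bf y}$ with itself. A real $\lambda$ is an H-eigenvalue of $\mathcal{H}$ if there is nonzero ${\bf x}\in\mathbb{R}^n$ with $\mathcal{H}{\bf x}^{m-1}=\lambda{\bf x}^{[m-1]}$, where $(\mathcal{H}{\bf x}^{m-1})_i=\sum_{i_2,\dots,i_m}\mathcal{H}_{ii_2\dots i_m}x_{i_2}\cdots x_{i_m}$ and ${\bf x}^{[m-1]}=(x_i^{m-1})_i$; $\lambda_{\min}(\mathcal{H}),\lambda_{\max}(\mathcal{H})$ are the smallest and largest H-eigenvalues (when they exist). $\|\cdot\|_p$ is the $\ell_p$-norm. *)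

theory Defs
  imports Complex_Main "HOL-Library.FuncSet"
begin

text \<open>Vectors in R^n are functions nat => real; only indices 0..n-1 matter.
  The Hankel tensor of order m, dimension n, generated by h has entries
  h (i_1 + ... + i_m), 0 <= i_j <= n-1.\<close>

definition hankel_tensor_apply ::
  "nat \<Rightarrow> nat \<Rightarrow> (nat \<Rightarrow> real) \<Rightarrow> (nat \<Rightarrow> real) \<Rightarrow> nat \<Rightarrow> real" where
  "hankel_tensor_apply m n h x i =
     (\<Sum>f \<in> Pi\<^sub>E {..<m-1} (\<lambda>_. {..<n}).
        h (i + (\<Sum>j<m-1. f j)) * (\<Prod>j<m-1. x (f j)))"

definition is_H_eigenvalue ::
  "nat \<Rightarrow> nat \<Rightarrow> (nat \<Rightarrow> real) \<Rightarrow> real \<Rightarrow> bool" where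
  "is_H_eigenvalue m n h lam \<longleftrightarrow>
     (\<exists>x::nat \<Rightarrow> real. (\<exists>i<n. x i \<noteq> 0) \<and>
        (\<forall>i<n. hankel_tensor_apply m n h x i = lam * x i ^ (m-1)))"

text \<open>Associated Hankel matrix: indices 0..N with N = m(n-1)/2, entries h(i+j).\<close>

definition hankel_matrix :: "(nat \<Rightarrow> real) \<Rightarrow> nat \<Rightarrow> nat \<Rightarrow> real" where
  "hankel_matrix h i j = h (i + j)"

definition mat_psd :: "nat \<Rightarrow> (nat \<Rightarrow> nat \<Rightarrow> real) \<Rightarrow> bool" where
  "mat_psd N A \<longleftrightarrow> (\<forall>v::nat \<Rightarrow> real. (\<Sum>i\<le>N. \<Sum>j\<le>N. v i * A i j * v j) \<ge> 0)"

definition mat_nsd :: "nat \<Rightarrow> (nat \<Rightarrow> nat \<Rightarrow> real) \<Rightarrow> bool" where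
  "mat_nsd N A \<longleftrightarrow> (\<forall>v::nat \<Rightarrow> real. (\<Sum>i\<le>N. \<Sum>j\<le>N. v i * A i j * v j) \<le> 0)"

definition mat_eigenvalues :: "nat \<Rightarrow> (nat \<Rightarrow> nat \<Rightarrow> real) \<Rightarrow> real set" where
  "mat_eigenvalues N A = {\<mu>. \<exists>v::nat \<Rightarrow> real. (\<exists>i\<le>N. v i \<noteq> 0) \<and>
        (\<forall>i\<le>N. (\<Sum>j\<le>N. A i j * v j) = \<mu> * v i)}"

definition lambda_min :: "nat \<Rightarrow> (nat \<Rightarrow> nat \<Rightarrow> real) \<Rightarrow> real" where
  "lambda_min N A = Min (mat_eigenvalues N A)"

definition lambda_max :: "nat \<Rightarrow> (nat \<Rightarrow> nat \<Rightarrow> real) \<Rightarrow> real" where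
  "lambda_max N A = Max (mat_eigenvalues N A)"

definition conv :: "(nat \<Rightarrow> real) \<Rightarrow> (nat \<Rightarrow> real) \<Rightarrow> nat \<Rightarrow> real" where
  "conv u v j = (\<Sum>i\<le>j. u i * v (j - i))"

fun conv_pow :: "(nat \<Rightarrow> real) \<Rightarrow> nat \<Rightarrow> nat \<Rightarrow> real" where
  "conv_pow y 0 = (\<lambda>j. if j = 0 then 1 else 0)"
| "conv_pow y (Suc 0) = y"
| "conv_pow y (Suc (Suc p)) = conv y (conv_pow y (Suc p))"

definition vec_n :: "nat \<Rightarrow> (nat \<Rightarrow> real) set" where
  "vec_n n = {y. \<forall>i\<ge>n. y i = 0}"

definition conv_ratio :: "nat \<Rightarrow> nat \<Rightarrow> nat \<Rightarrow> (nat \<Rightarrow> real) \<Rightarrow> real" where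
  "conv_ratio n p q y =
     (\<Sum>j\<le>p*(n-1). (conv_pow y p j)\<^sup>2) / (\<Sum>i<n. \<bar>y i\<bar> ^ q)"

definition const_c :: "nat \<Rightarrow> nat \<Rightarrow> real" where
  "const_c m n =
     (if even m
      then Inf {conv_ratio n (m div 2) m y | y. y \<in> vec_n n \<and> (\<exists>i<n. y i \<noteq> 0)}
      else Inf {conv_ratio n ((m-1) div 2) (m-1) y | y. y \<in> vec_n n \<and> (\<exists>i<n. y i \<noteq> 0)})"

end

theory Submission
  imports Defs "HOL-Analysis.Analysis" "Jordan_Normal_Form.Char_Poly"
begin


definition Qf :: "nat \<Rightarrow> (nat \<Rightarrow> nat \<Rightarrow> real) \<Rightarrow> (nat \<Rightarrow> real) \<Rightarrow> real" where
  "Qf N A v = (\<Sum>i\<le>N. \<Sum>j\<le>N. v i * A i j * v j)"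
definition nrm :: "nat \<Rightarrow> (nat \<Rightarrow> real) \<Rightarrow> real" where
  "nrm N v = (\<Sum>i\<le>N. (v i)\<^sup>2)"

lemma eig_finite: "finite (mat_eigenvalues N A)"
proof -
  let ?M = "mat (Suc N) (Suc N) (\<lambda>(i,j). A i j) :: real mat"
  have M: "?M \<in> carrier_mat (Suc N) (Suc N)" by auto
  have "mat_eigenvalues N A \<subseteq> {k. poly (char_poly ?M) k = 0}"
  proof
    fix \<mu> assume "\<mu> \<in> mat_eigenvalues N A"
    then obtain v where v: "\<exists>i\<le>N. v i \<noteq> 0" "\<forall>i\<le>N. (\<Sum>j\<le>N. A i j * v j) = \<mu> * v i"
      by (auto simp: mat_eigenvalues_def)
    let ?v = "vec (Suc N) v"
    have "eigenvector ?M ?v \<mu>" unfolding eigenvector_def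
    proof (intro conjI)
      show "?v \<in> carrier_vec (dim_row ?M)" by auto
      from v(1) obtain i where "i \<le> N" "v i \<noteq> 0" by auto
      then show "?v \<noteq> 0\<^sub>v (dim_row ?M)"
        by (metis dim_row_mat(1) index_vec index_zero_vec(1) le_imp_less_Suc)
      show "?M *\<^sub>v ?v = \<mu> \<cdot>\<^sub>v ?v"
      proof (rule eq_vecI)
        fix i assume i: "i < dim_vec (\<mu> \<cdot>\<^sub>v ?v)"
        hence iN: "i \<le> N" by simp
        have "(?M *\<^sub>v ?v) $ i = (\<Sum>j<Suc N. A i j * v j)"
          using i by (simp add: scalar_prod_def row_def atLeast0LessThan)
        also have "\<dots> = \<mu> * v i" using v(2) iN by (simp add: lessThan_Suc_atMost)
        finally show "(?M *\<^sub>v ?v) $ i = (\<mu> \<cdot>\<^sub>v ?v) $ i" using i by simp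
      qed simp
    qed
    then have "eigenvalue ?M \<mu>" unfolding eigenvalue_def by blast
    then show "\<mu> \<in> {k. poly (char_poly ?M) k = 0}" using eigenvalue_root_char_poly[OF M] by simp
  qed
  moreover have "char_poly ?M \<noteq> 0" using degree_monic_char_poly[OF M] by (metis coeff_0 zero_neq_one)
  ultimately show ?thesis using poly_roots_finite finite_subset by blast
qed

lemma quad_zero:
  fixes b q :: real
  assumes "\<And>t. 0 \<le> 2 * t * b + t^2 * q" shows "b = 0"
proof -
  have q: "q \<ge> 0" using assms[of "1"] assms[of "-1"] by simp
  have q1: "q + 1 > 0" using q by simp
  define d where "d = q + 1"
  have d: "d > 0" "d \<noteq> 0" using q1 d_def by auto
  have e: "2 * (-b/d) * b + (-b/d)^2 * q = (- 2 * b^2 * d + b^2 * q) / d^2"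
    using d by (simp add: field_simps power2_eq_square)
  have "0 \<le> (- 2 * b^2 * d + b^2 * q) / d^2" using assms[of "-b/d"] e by simp
  hence "0 \<le> - 2 * b^2 * d + b^2 * q" using d by (simp add: zero_le_divide_iff)
  hence "b^2 * (q+2) \<le> 0" unfolding d_def by (simp add: algebra_simps)
  hence "b^2 \<le> 0" using q by (smt (verit) mult_pos_pos zero_le_power2)
  thus ?thesis by simp
qed

lemma Qf_add:
  assumes sym: "\<And>i j. A i j = A j i"
  shows "Qf N A (\<lambda>i. v i + t * w i) = Qf N A v + 2 * t * (\<Sum>i\<le>N. \<Sum>j\<le>N. w i * A i j * v j) + t^2 * Qf N A w"
proof -
  have s: "(\<Sum>i\<le>N. \<Sum>j\<le>N. v i * A i j * w j) = (\<Sum>i\<le>N. \<Sum>j\<le>N. w i * A i j * v j)"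
    by (subst sum.swap) (simp add: sym mult.commute mult.left_commute)
  have "Qf N A (\<lambda>i. v i + t * w i) = Qf N A v + t * (\<Sum>i\<le>N. \<Sum>j\<le>N. v i * A i j * w j)
     + t * (\<Sum>i\<le>N. \<Sum>j\<le>N. w i * A i j * v j) + t^2 * Qf N A w"
    unfolding Qf_def by (simp add: algebra_simps sum.distrib sum_distrib_left power2_eq_square)
  thus ?thesis using s by simp
qed

lemma psd_kernel:
  assumes sym: "\<And>i j. A i j = A j i" and psd: "\<And>u. Qf N A u \<ge> 0" and z: "Qf N A v = 0"
  shows "(\<Sum>i\<le>N. \<Sum>j\<le>N. w i * A i j * v j) = 0"
proof (rule quad_zero[where q="Qf N A w"])
  fix t :: real
  show "0 \<le> 2 * t * (\<Sum>i\<le>N. \<Sum>j\<le>N. w i * A i j * v j) + t^2 * Qf N A w"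
    using psd[of "\<lambda>i. v i + t * w i"] Qf_add[OF sym, where N=N and v=v and t=t and w=w] z by simp
qed


lemma cont_nrm: "continuous_on UNIV (\<lambda>v::nat\<Rightarrow>real. nrm N v)"
  unfolding nrm_def by (intro continuous_intros continuous_on_product_coordinates)

lemma cont_Qf: "continuous_on UNIV (\<lambda>v::nat\<Rightarrow>real. Qf N A v)"
  unfolding Qf_def by (intro continuous_intros continuous_on_product_coordinates)

lemma Qf_shift_diag:
  "Qf N (\<lambda>i j. A i j - (if i = j then \<mu> else 0)) w = Qf N A w - \<mu> * nrm N w"
proof -
  have "Qf N (\<lambda>i j. A i j - (if i = j then \<mu> else 0)) w
     = Qf N A w - (\<Sum>i\<le>N. \<Sum>j\<le>N. w i * (if i = j then \<mu> else 0) * w j)"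
    unfolding Qf_def by (simp add: algebra_simps sum_subtractf)
  also have "(\<Sum>i\<le>N. \<Sum>j\<le>N. w i * (if i = j then \<mu> else 0) * w j) = \<mu> * nrm N w"
  proof -
    have "(\<Sum>j\<le>N. w i * (if i = j then \<mu> else 0) * w j) = \<mu> * (w i)^2" if "i \<le> N" for i
    proof -
      have "(\<Sum>j\<le>N. w i * (if i = j then \<mu> else 0) * w j) = (\<Sum>j\<le>N. if i = j then \<mu> * (w i)^2 else 0)"
        by (rule sum.cong) (auto simp: power2_eq_square)
      thus ?thesis using that by simp
    qed
    thus ?thesis unfolding nrm_def by (simp add: sum_distrib_left)
  qed
  finally show ?thesis .
qed

lemma rayleigh:
  assumes sym: "\<And>i j. A i j = A j i"
  shows "\<exists>v. (\<exists>i\<le>N. v i \<noteq> 0) \<and> (\<forall>i\<le>N. (\<Sum>j\<le>N. A i j * v j) = Qf N A v * v i)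
            \<and> (\<forall>u. Qf N A u \<ge> Qf N A v * nrm N u)"
proof -
  define S where "S i = (if i \<le> N then {-1..1::real} else {0})" for i
  define K where "K = PiE UNIV S \<inter> {v. nrm N v = 1}"
  have "compactin (product_topology (\<lambda>i. euclidean) UNIV) (PiE UNIV S)"
    by (subst compactin_PiE) (auto simp: S_def)
  hence "compact (PiE UNIV S)" by (simp add: euclidean_product_topology)
  moreover have "closed {v::nat\<Rightarrow>real. nrm N v = 1}"
    by (rule closed_Collect_eq) (auto intro: cont_nrm)
  ultimately have cK: "compact K" unfolding K_def by blast
  define e0 where "e0 = (\<lambda>i::nat. if i = 0 then 1 else (0::real))"
  have "nrm N e0 = (\<Sum>i\<le>N. if i = 0 then 1 else 0)" unfolding nrm_def e0_def
    by (rule sum.cong) auto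
  hence "nrm N e0 = 1" by simp
  hence "e0 \<in> K" unfolding K_def S_def PiE_UNIV_domain by (auto simp: e0_def)
  hence neK: "K \<noteq> {}" by blast
  obtain v where vK: "v \<in> K" and vmin: "\<And>y. y \<in> K \<Longrightarrow> Qf N A v \<le> Qf N A y"
    using continuous_attains_inf[OF cK neK, of "Qf N A"] continuous_on_subset[OF cont_Qf] by blast
  define \<mu> where "\<mu> = Qf N A v"
  have nv: "nrm N v = 1" using vK K_def by auto
  have bound: "Qf N A u \<ge> \<mu> * nrm N u" for u
  proof (cases "nrm N u = 0")
    case True
    have "\<forall>i\<in>{..N}. (u i)^2 = 0" using True unfolding nrm_def
      by (subst sum_nonneg_eq_0_iff[symmetric]) auto
    hence "\<forall>i\<le>N. u i = 0" by auto
    hence "Qf N A u = 0" unfolding Qf_def by simp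
    thus ?thesis using True by simp
  next
    case False
    have nn: "nrm N u \<ge> 0" unfolding nrm_def by (simp add: sum_nonneg)
    with False have pos: "nrm N u > 0" by simp
    define s where "s = sqrt (nrm N u)"
    have s: "s > 0" "s^2 = nrm N u" using pos s_def by auto
    define u' where "u' i = (if i \<le> N then u i / s else 0)" for i
    have "u' \<in> K" unfolding K_def
    proof
      show "u' \<in> PiE UNIV S" unfolding PiE_UNIV_domain
      proof (rule Pi_I)
        fix i show "u' i \<in> S i"
        proof (cases "i \<le> N")
          case True
          have "(u i)^2 \<le> nrm N u" unfolding nrm_def
            using member_le_sum[of i "{..N}" "\<lambda>i. (u i)^2"] True by auto
          hence "sqrt ((u i)^2) \<le> s" unfolding s_def by (rule real_sqrt_le_mono)
          hence "\<bar>u i\<bar> \<le> s" by (simp only: real_sqrt_abs)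
          hence "\<bar>u i\<bar> / s \<le> 1" using s by (simp add: divide_le_eq_1)
          hence "\<bar>u i / s\<bar> \<le> 1" using s by (simp only: abs_divide abs_of_pos)
          hence "u i / s \<le> 1" "-(u i / s) \<le> 1" by (metis abs_le_D1, metis abs_le_D2)
          hence "u i / s \<in> {-1..1}" unfolding atLeastAtMost_iff by linarith
          thus ?thesis using True by (simp add: u'_def S_def)
        next
          case False thus ?thesis by (simp add: u'_def S_def)
        qed
      qed
      have "nrm N u' = (\<Sum>i\<le>N. (u i)^2 / s^2)" unfolding nrm_def u'_def
        by (rule sum.cong) (auto simp: power_divide)
      also have "\<dots> = nrm N u / s^2" unfolding nrm_def by (rule sum_divide_distrib[symmetric])
      finally have "nrm N u' = nrm N u / s^2" .
      thus "u' \<in> {v. nrm N v = 1}" using s pos by simp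
    qed
    hence "\<mu> \<le> Qf N A u'" unfolding \<mu>_def by (rule vmin)
    also have "Qf N A u' = (\<Sum>i\<le>N. \<Sum>j\<le>N. u i * A i j * u j / s^2)" unfolding Qf_def
    proof (intro sum.cong refl)
      fix i j assume "i \<in> {..N}" "j \<in> {..N}"
      thus "u' i * A i j * u' j = u i * A i j * u j / s^2" using s
        by (simp add: u'_def power2_eq_square)
    qed
    also have "\<dots> = Qf N A u / s^2" unfolding Qf_def by (simp add: sum_divide_distrib)
    finally have "\<mu> \<le> Qf N A u / s^2" .
    thus ?thesis using s pos by (simp add: pos_le_divide_eq)
  qed
  define B where "B i j = A i j - (if i = j then \<mu> else 0)" for i j
  have symB: "\<And>i j. B i j = B j i" using sym unfolding B_def by auto
  have QB: "Qf N B w = Qf N A w - \<mu> * nrm N w" for w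
    unfolding B_def by (rule Qf_shift_diag)
  have psdB: "\<And>u. Qf N B u \<ge> 0" using bound QB by simp
  have zB: "Qf N B v = 0" using QB nv \<mu>_def by simp
  have eig: "(\<Sum>j\<le>N. A i j * v j) = \<mu> * v i" if i: "i \<le> N" for i
  proof -
    have "(\<Sum>k\<le>N. \<Sum>j\<le>N. (if k = i then 1 else 0) * B k j * v j) = 0"
      by (rule psd_kernel[OF symB psdB zB])
    moreover have "(\<Sum>k\<le>N. \<Sum>j\<le>N. (if k = i then 1 else 0) * B k j * v j)
       = (\<Sum>k\<le>N. if k = i then (\<Sum>j\<le>N. B i j * v j) else 0)"
      by (rule sum.cong) auto
    ultimately have "(\<Sum>j\<le>N. B i j * v j) = 0" using i by simp
    moreover have "(\<Sum>j\<le>N. B i j * v j) = (\<Sum>j\<le>N. A i j * v j - (if j = i then \<mu> * v i else 0))"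
      unfolding B_def by (rule sum.cong) (auto simp: algebra_simps)
    moreover have "\<dots> = (\<Sum>j\<le>N. A i j * v j) - \<mu> * v i" using i by (simp add: sum_subtractf)
    ultimately show ?thesis by simp
  qed
  have "\<exists>i\<le>N. v i \<noteq> 0"
  proof (rule ccontr)
    assume "\<not> ?thesis" hence "nrm N v = 0" unfolding nrm_def by simp
    thus False using nv by simp
  qed
  thus ?thesis using eig bound \<mu>_def by blast
qed



lemma cp_Suc: "conv_pow y (Suc p) = conv y (conv_pow y p)"
proof (cases p)
  case 0
  have "conv y (conv_pow y 0) j = y j" for j
  proof -
    have "conv y (conv_pow y 0) j = (\<Sum>i\<le>j. if i = j then y i else 0)"
      unfolding conv_def by (rule sum.cong) auto
    thus ?thesis by simp
  qed
  thus ?thesis using 0 by auto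
next
  case (Suc q) thus ?thesis by simp
qed

lemma cp_supp:
  assumes x: "\<And>i. i > K \<Longrightarrow> x i = 0"
  shows "k > p * K \<Longrightarrow> conv_pow x p k = 0"
proof (induction p arbitrary: k)
  case 0 thus ?case by simp
next
  case (Suc p)
  have "conv x (conv_pow x p) k = 0" unfolding conv_def
  proof (rule sum.neutral, rule ballI)
    fix i assume "i \<in> {..k}"
    show "x i * conv_pow x p (k - i) = 0"
    proof (cases "i > K")
      case True thus ?thesis using x by simp
    next
      case False
      hence "k - i > p * K" using Suc.prems by simp
      thus ?thesis using Suc.IH by simp
    qed
  qed
  thus ?case by (simp add: cp_Suc)
qed

lemma conv_sum:
  assumes u: "\<And>i. i > Ka \<Longrightarrow> u i = 0" and v: "\<And>i. i > Kb \<Longrightarrow> v i = 0"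
  shows "(\<Sum>k\<le>Ka+Kb. g k * conv u v k) = (\<Sum>a\<le>Ka. u a * (\<Sum>b\<le>Kb. g (a+b) * v b))"
proof -
  have "(\<Sum>k\<le>Ka+Kb. g k * conv u v k) = (\<Sum>k\<le>Ka+Kb. \<Sum>i\<le>k. g (i + (k - i)) * u i * v (k - i))"
    unfolding conv_def by (simp add: sum_distrib_left mult.assoc)
  also have "\<dots> = (\<Sum>(i,j)\<in>{(i,j). i+j \<le> Ka+Kb}. g (i+j) * u i * v j)"
    by (rule sum.triangle_reindex_eq[symmetric])
  also have "\<dots> = (\<Sum>(i,j)\<in>{..Ka}\<times>{..Kb}. g (i+j) * u i * v j)"
  proof (rule sum.mono_neutral_right)
    show "finite {(i,j). i+j \<le> Ka+Kb}"
      by (rule finite_subset[of _ "{..Ka+Kb}\<times>{..Ka+Kb}"]) auto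
    show "{..Ka}\<times>{..Kb} \<subseteq> {(i,j). i+j \<le> Ka+Kb}" by auto
    show "\<forall>p\<in>{(i,j). i+j \<le> Ka+Kb} - {..Ka}\<times>{..Kb}. (\<lambda>(i,j). g (i+j) * u i * v j) p = 0"
    proof (rule ballI)
      fix p assume pin: "p \<in> {(i,j). i+j \<le> Ka+Kb} - {..Ka}\<times>{..Kb}"
      obtain a b where p: "p = (a,b)" by fastforce
      have "a > Ka \<or> b > Kb" using pin p by auto
      thus "(\<lambda>(i,j). g (i+j) * u i * v j) p = 0" using u v p by auto
    qed
  qed
  also have "\<dots> = (\<Sum>a\<le>Ka. u a * (\<Sum>b\<le>Kb. g (a+b) * v b))"
    by (subst sum.cartesian_product[symmetric]) (simp add: sum_distrib_left mult_ac)
  finally show ?thesis .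
qed

lemma tensor_sum:
  assumes x: "\<And>i. i \<ge> n \<Longrightarrow> x i = 0" and n: "n \<ge> 1"
  shows "(\<Sum>f\<in>Pi\<^sub>E {..<p} (\<lambda>_. {..<n}). g (\<Sum>j<p. f j) * (\<Prod>j<p. x (f j)))
       = (\<Sum>k\<le>p*(n-1). g k * conv_pow x p k)"
proof (induction p arbitrary: g)
  case 0
  show ?case by simp
next
  case (Suc p)
  let ?K = "n - 1"
  have x': "\<And>i. i > ?K \<Longrightarrow> x i = 0" using x n by auto
  have nK: "{..<n} = {..?K}" using n by auto
  have bij: "Pi\<^sub>E {..<Suc p} (\<lambda>_. {..<n}) = (\<lambda>(a, f). f(p := a)) ` ({..<n} \<times> Pi\<^sub>E {..<p} (\<lambda>_. {..<n}))"
    unfolding lessThan_Suc by (rule PiE_insert_eq)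
  have inj: "inj_on (\<lambda>(a, f). f(p := a)) ({..<n} \<times> Pi\<^sub>E {..<p} (\<lambda>_. {..<n}))"
    by (rule inj_combinator) auto
  have "(\<Sum>f\<in>Pi\<^sub>E {..<Suc p} (\<lambda>_. {..<n}). g (\<Sum>j<Suc p. f j) * (\<Prod>j<Suc p. x (f j)))
      = (\<Sum>(a,f)\<in>{..<n} \<times> Pi\<^sub>E {..<p} (\<lambda>_. {..<n}). g (\<Sum>j<Suc p. (f(p:=a)) j) * (\<Prod>j<Suc p. x ((f(p:=a)) j)))"
    unfolding bij by (subst sum.reindex[OF inj]) (simp add: case_prod_beta)
  also have "\<dots> = (\<Sum>(a,f)\<in>{..<n} \<times> Pi\<^sub>E {..<p} (\<lambda>_. {..<n}). x a * (g (a + (\<Sum>j<p. f j)) * (\<Prod>j<p. x (f j))))"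
  proof (rule sum.cong[OF refl], clarify)
    fix a :: nat and f :: "nat \<Rightarrow> nat"
    have s: "(\<Sum>j<p. (f(p:=a)) j) = (\<Sum>j<p. f j)" by (rule sum.cong) auto
    have pr: "(\<Prod>j<p. x ((f(p:=a)) j)) = (\<Prod>j<p. x (f j))" by (rule prod.cong) auto
    show "g (\<Sum>j<Suc p. (f(p:=a)) j) * (\<Prod>j<Suc p. x ((f(p:=a)) j)) = x a * (g (a + (\<Sum>j<p. f j)) * (\<Prod>j<p. x (f j)))"
      using s pr by (simp add: add.commute mult_ac)
  qed
  also have "\<dots> = (\<Sum>a<n. x a * (\<Sum>f\<in>Pi\<^sub>E {..<p} (\<lambda>_. {..<n}). g (a + (\<Sum>j<p. f j)) * (\<Prod>j<p. x (f j))))"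
    by (subst sum.cartesian_product[symmetric]) (simp add: sum_distrib_left)
  also have "\<dots> = (\<Sum>a<n. x a * (\<Sum>k\<le>p*?K. g (a + k) * conv_pow x p k))"
  proof (rule sum.cong[OF refl])
    fix a show "x a * (\<Sum>f\<in>Pi\<^sub>E {..<p} (\<lambda>_. {..<n}). g (a + (\<Sum>j<p. f j)) * (\<Prod>j<p. x (f j)))
       = x a * (\<Sum>k\<le>p*?K. g (a + k) * conv_pow x p k)"
      using Suc.IH[of "\<lambda>s. g (a + s)"] by simp
  qed
  also have "\<dots> = (\<Sum>a\<le>?K. x a * (\<Sum>k\<le>p*?K. g (a + k) * conv_pow x p k))"
    by (simp only: nK)
  also have "\<dots> = (\<Sum>k\<le>?K + p*?K. g k * conv x (conv_pow x p) k)"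
    by (rule conv_sum[symmetric]) (auto intro: x' cp_supp[OF x'])
  also have "\<dots> = (\<Sum>k\<le>Suc p * ?K. g k * conv_pow x (Suc p) k)"
    by (simp add: cp_Suc)
  finally show ?case .
qed

lemma cp_add:
  assumes x: "\<And>i. i > K \<Longrightarrow> x i = 0"
  shows "(\<Sum>k\<le>(p+q)*K. g k * conv_pow x (p+q) k)
       = (\<Sum>a\<le>p*K. conv_pow x p a * (\<Sum>b\<le>q*K. g (a+b) * conv_pow x q b))"
proof (induction p arbitrary: g)
  case 0
  have "(\<Sum>a\<le>0::nat. conv_pow x 0 a * (\<Sum>b\<le>q*K. g (a+b) * conv_pow x q b)) = (\<Sum>b\<le>q*K. g b * conv_pow x q b)"
    by simp
  thus ?case by simp
next
  case (Suc p)
  have "(\<Sum>k\<le>(Suc p+q)*K. g k * conv_pow x (Suc p+q) k) = (\<Sum>k\<le>K + (p+q)*K. g k * conv x (conv_pow x (p+q)) k)"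
    by (simp add: cp_Suc add.assoc)
  also have "\<dots> = (\<Sum>a\<le>K. x a * (\<Sum>b\<le>(p+q)*K. g (a+b) * conv_pow x (p+q) b))"
    by (rule conv_sum) (auto intro: x cp_supp[OF x])
  also have "\<dots> = (\<Sum>a\<le>K. x a * (\<Sum>c\<le>p*K. conv_pow x p c * (\<Sum>d\<le>q*K. g (a+c+d) * conv_pow x q d)))"
    using Suc.IH by (simp add: add.assoc)
  also have "\<dots> = (\<Sum>a\<le>K. x a * (\<Sum>c\<le>p*K. (\<Sum>d\<le>q*K. g (a+c+d) * conv_pow x q d) * conv_pow x p c))"
    by (simp add: mult.commute)
  also have "\<dots> = (\<Sum>e\<le>K + p*K. (\<Sum>d\<le>q*K. g (e+d) * conv_pow x q d) * conv x (conv_pow x p) e)"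
    using conv_sum[where g="\<lambda>e. \<Sum>d\<le>q*K. g (e+d) * conv_pow x q d" and u=x and Ka=K and v="conv_pow x p" and Kb="p*K"]
      x cp_supp[OF x] by (simp add: add.assoc)
  also have "\<dots> = (\<Sum>a\<le>Suc p*K. conv_pow x (Suc p) a * (\<Sum>b\<le>q*K. g (a+b) * conv_pow x q b))"
    by (simp add: cp_Suc mult.commute)
  finally show ?case .
qed



lemma lmin_facts:
  assumes sym: "\<And>i j. A i j = A j i"
  shows "(\<forall>u. Qf N A u \<ge> lambda_min N A * nrm N u) \<and> lambda_min N A \<in> mat_eigenvalues N A"
proof -
  have "\<exists>v. (\<exists>i\<le>N. v i \<noteq> 0) \<and> (\<forall>i\<le>N. (\<Sum>j\<le>N. A i j * v j) = Qf N A v * v i)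
            \<and> (\<forall>u. Qf N A u \<ge> Qf N A v * nrm N u)" by (rule rayleigh[OF sym])
  then obtain v where v: "\<exists>i\<le>N. v i \<noteq> 0" "\<forall>i\<le>N. (\<Sum>j\<le>N. A i j * v j) = Qf N A v * v i"
     "\<forall>u. Qf N A u \<ge> Qf N A v * nrm N u" by blast
  have inS: "Qf N A v \<in> mat_eigenvalues N A" unfolding mat_eigenvalues_def using v(1,2) by blast
  have fin: "finite (mat_eigenvalues N A)" by (rule eig_finite)
  have le: "lambda_min N A \<le> Qf N A v" unfolding lambda_min_def using fin inS by simp
  have "Qf N A u \<ge> lambda_min N A * nrm N u" for u
  proof -
    have "nrm N u \<ge> 0" unfolding nrm_def by (simp add: sum_nonneg)
    hence "lambda_min N A * nrm N u \<le> Qf N A v * nrm N u" using le by (simp add: mult_right_mono)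
    moreover have "Qf N A v * nrm N u \<le> Qf N A u" using v(3) by blast
    ultimately show ?thesis by linarith
  qed
  moreover have "lambda_min N A \<in> mat_eigenvalues N A" unfolding lambda_min_def
    by (rule Min_in[OF fin]) (use inS in blast)
  ultimately show ?thesis by blast
qed

lemma eig_Q:
  assumes "\<mu> \<in> mat_eigenvalues N A"
  shows "\<exists>v. nrm N v > 0 \<and> Qf N A v = \<mu> * nrm N v"
proof -
  obtain v where v: "\<exists>i\<le>N. v i \<noteq> 0" "\<forall>i\<le>N. (\<Sum>j\<le>N. A i j * v j) = \<mu> * v i"
    using assms unfolding mat_eigenvalues_def by blast
  have "Qf N A v = (\<Sum>i\<le>N. v i * (\<Sum>j\<le>N. A i j * v j))" unfolding Qf_def
    by (simp add: sum_distrib_left mult.assoc)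
  also have "\<dots> = (\<Sum>i\<le>N. \<mu> * (v i)^2)" using v(2) by (intro sum.cong) (auto simp: power2_eq_square)
  also have "\<dots> = \<mu> * nrm N v" unfolding nrm_def by (simp add: sum_distrib_left)
  finally have Q: "Qf N A v = \<mu> * nrm N v" .
  obtain i where i: "i \<le> N" "v i \<noteq> 0" using v(1) by blast
  have "nrm N v \<ge> (v i)^2" unfolding nrm_def using i member_le_sum[of i "{..N}" "\<lambda>i. (v i)^2"] by auto
  moreover have "(v i)^2 > 0" using i by simp
  ultimately have "nrm N v > 0" by linarith
  thus ?thesis using Q by blast
qed

lemma psd_lmin_nonneg:
  assumes sym: "\<And>i j. A i j = A j i" and psd: "mat_psd N A"
  shows "lambda_min N A \<ge> 0"
proof -
  have "lambda_min N A \<in> mat_eigenvalues N A" using lmin_facts[where A=A and N=N, OF sym] by blast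
  from eig_Q[OF this] obtain v where v: "nrm N v > 0" "Qf N A v = lambda_min N A * nrm N v"
    by blast
  have "Qf N A v \<ge> 0" using psd unfolding mat_psd_def Qf_def by blast
  thus ?thesis using v by (simp add: zero_le_mult_iff)
qed

definition shift :: "nat \<Rightarrow> (nat \<Rightarrow> real) \<Rightarrow> nat \<Rightarrow> real" where
  "shift k z a = (if k \<le> a then z (a - k) else 0)"

lemma shift_sum:
  assumes z: "\<And>i. i > M \<Longrightarrow> z i = 0" and MN: "M + k \<le> N"
  shows "(\<Sum>a\<le>N. shift k z a * \<phi> a) = (\<Sum>a\<le>M. z a * \<phi> (a + k))"
proof -
  have "(\<Sum>a\<le>N. shift k z a * \<phi> a) = (\<Sum>a\<in>{k..N}. shift k z a * \<phi> a)"
    by (rule sum.mono_neutral_right) (auto simp: shift_def)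
  also have "{k..N} = {0+k..(N-k)+k}" using MN by simp
  also have "(\<Sum>a\<in>{0+k..(N-k)+k}. shift k z a * \<phi> a) = (\<Sum>a\<in>{0..N-k}. shift k z (a+k) * \<phi> (a+k))"
    by (rule sum.shift_bounds_cl_nat_ivl)
  also have "\<dots> = (\<Sum>a\<in>{0..N-k}. z a * \<phi> (a+k))" by (simp add: shift_def)
  also have "\<dots> = (\<Sum>a\<le>M. z a * \<phi> (a+k))"
    by (rule sum.mono_neutral_right) (use MN z in auto)
  finally show ?thesis .
qed

lemma apply_restrict:
  "hankel_tensor_apply m n h x i = hankel_tensor_apply m n h (\<lambda>j. if j < n then x j else 0) i"
  unfolding hankel_tensor_apply_def
  by (intro sum.cong refl arg_cong2[where f="(*)"] prod.cong) (auto simp: PiE_iff)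

lemma apply_conv:
  assumes x: "\<And>i. i \<ge> n \<Longrightarrow> x i = 0" and n: "n \<ge> 1"
  shows "hankel_tensor_apply m n h x i = (\<Sum>k\<le>(m-1)*(n-1). h (i + k) * conv_pow x (m-1) k)"
  unfolding hankel_tensor_apply_def by (rule tensor_sum[OF x n])

lemma apply_shift:
  assumes x: "\<And>i. i \<ge> n \<Longrightarrow> x i = 0" and n: "n \<ge> 1"
    and k1: "p*(n-1) + k1 \<le> N" and k2: "p*(n-1) + k2 \<le> N"
  shows "hankel_tensor_apply (2*p+1) n h x (k1+k2)
     = (\<Sum>a\<le>N. \<Sum>b\<le>N. shift k1 (conv_pow x p) a * hankel_matrix h a b * shift k2 (conv_pow x p) b)"
proof -
  let ?K = "n - 1" and ?z = "conv_pow x p"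
  have x': "\<And>i. i > ?K \<Longrightarrow> x i = 0" using x n by auto
  have zs: "\<And>i. i > p * ?K \<Longrightarrow> ?z i = 0" by (rule cp_supp[OF x'])
  have "hankel_tensor_apply (2*p+1) n h x (k1+k2) = (\<Sum>k\<le>(p+p)*?K. h (k1+k2+k) * conv_pow x (p+p) k)"
    using apply_conv[OF x n, where m="2*p+1" and h=h and i="k1+k2"] by (simp add: mult_2)
  also have "\<dots> = (\<Sum>a\<le>p*?K. ?z a * (\<Sum>b\<le>p*?K. h (k1+k2+(a+b)) * ?z b))"
    by (rule cp_add[OF x'])
  also have "\<dots> = (\<Sum>a\<le>N. shift k1 ?z a * (\<Sum>b\<le>N. shift k2 ?z b * h (a+b)))"
  proof -
    have "(\<Sum>a\<le>N. shift k1 ?z a * (\<Sum>b\<le>N. shift k2 ?z b * h (a+b)))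
        = (\<Sum>a\<le>N. shift k1 ?z a * (\<Sum>b\<le>p*?K. ?z b * h (a+(b+k2))))"
      using shift_sum[OF zs k2] by simp
    also have "\<dots> = (\<Sum>a\<le>p*?K. ?z a * (\<Sum>b\<le>p*?K. ?z b * h ((a+k1)+(b+k2))))"
      by (rule shift_sum[OF zs k1])
    finally show ?thesis by (simp add: mult.commute add_ac)
  qed
  also have "\<dots> = (\<Sum>a\<le>N. \<Sum>b\<le>N. shift k1 ?z a * hankel_matrix h a b * shift k2 ?z b)"
    by (simp add: hankel_matrix_def sum_distrib_left mult_ac)
  finally show ?thesis .
qed

lemma nrm_shift:
  assumes z: "\<And>i. i > M \<Longrightarrow> z i = 0" and MN: "M + k \<le> N"
  shows "nrm N (shift k z) = (\<Sum>j\<le>M. (z j)^2)"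
proof -
  have "nrm N (shift k z) = (\<Sum>a\<le>N. shift k z a * shift k z a)" unfolding nrm_def by (simp add: power2_eq_square)
  also have "\<dots> = (\<Sum>a\<le>M. z a * shift k z (a + k))" by (rule shift_sum[OF z MN])
  also have "\<dots> = (\<Sum>j\<le>M. (z j)^2)" by (simp add: shift_def power2_eq_square)
  finally show ?thesis .
qed



lemma psd_part:
  fixes m n :: nat and h :: "nat \<Rightarrow> real"
  assumes m2: "m \<ge> 2" and n1: "n \<ge> 1" and ev: "even (m * (n - 1))"
    and psd: "mat_psd (m * (n - 1) div 2) (hankel_matrix h)"
    and eig: "is_H_eigenvalue m n h lam"
  shows "lam \<ge> const_c m n * lambda_min (m * (n - 1) div 2) (hankel_matrix h)"
proof -
  define N where "N = m*(n-1) div 2"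
  define K where "K = n - 1"
  define A where "A = hankel_matrix h"
  have sym: "\<And>i j. A i j = A j i" by (simp add: A_def hankel_matrix_def add.commute)
  define lm where "lm = lambda_min N A"
  have lmQ: "\<And>u. Qf N A u \<ge> lm * nrm N u" using lmin_facts[where A=A and N=N, OF sym] lm_def by blast
  have psdA: "mat_psd N A" using psd by (simp add: A_def N_def)
  have lm0: "lm \<ge> 0" using psd_lmin_nonneg[where A=A and N=N, OF sym psdA] by (simp add: lm_def)
  have psdQ: "\<And>u. Qf N A u \<ge> 0" using psdA unfolding mat_psd_def Qf_def by blast
  obtain x0 where x0: "\<exists>i<n. x0 i \<noteq> 0" "\<forall>i<n. hankel_tensor_apply m n h x0 i = lam * x0 i ^ (m-1)"
    using eig unfolding is_H_eigenvalue_def by blast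
  define x where "x j = (if j < n then x0 j else 0)" for j
  have xz: "\<And>i. i \<ge> n \<Longrightarrow> x i = 0" by (simp add: x_def)
  have xK: "\<And>i. i > K \<Longrightarrow> x i = 0" using xz K_def n1 by auto
  have xnz: "\<exists>i<n. x i \<noteq> 0" using x0(1) x_def by auto
  have eqx: "\<And>i. i < n \<Longrightarrow> hankel_tensor_apply m n h x i = lam * x i ^ (m-1)"
  proof -
    fix i assume i: "i < n"
    have "hankel_tensor_apply m n h x i = hankel_tensor_apply m n h x0 i"
      unfolding x_def by (rule apply_restrict[symmetric])
    thus "hankel_tensor_apply m n h x i = lam * x i ^ (m-1)" using x0(2) i by (simp add: x_def)
  qed
  define p where "p = m div 2"
  have p1: "p \<ge> 1" using m2 p_def by auto
  define CS where "CS = {conv_ratio n p (2*p) y | y. y \<in> vec_n n \<and> (\<exists>i<n. y i \<noteq> 0)}"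
  define c where "c = const_c m n"
  have cCS: "c = Inf CS"
  proof (cases "even m")
    case True
    hence "m = 2*p" using p_def by simp
    thus ?thesis using True unfolding c_def const_c_def CS_def p_def by simp
  next
    case False
    hence "m - 1 = 2*p" using p_def odd_two_times_div_two_nat[of m] by simp
    moreover have "(m-1) div 2 = p" using p_def False by presburger
    ultimately show ?thesis using False unfolding c_def const_c_def CS_def by simp
  qed
  define z where "z = conv_pow x p"
  define Num where "Num = (\<Sum>j\<le>p*K. (z j)^2)"
  define D where "D = (\<Sum>i<n. \<bar>x i\<bar>^(2*p))"
  obtain i0 where i0: "i0 < n" "x i0 \<noteq> 0" using xnz by blast
  have D: "D > 0" unfolding D_def
    by (rule sum_pos2[of _ i0]) (use i0 in auto)
  have Num0: "Num \<ge> 0" unfolding Num_def by (simp add: sum_nonneg)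
  have inCS: "Num / D \<in> CS"
  proof -
    have "conv_ratio n p (2*p) x = Num / D" unfolding conv_ratio_def Num_def D_def z_def K_def by simp
    moreover have "x \<in> vec_n n" unfolding vec_n_def using xz by auto
    ultimately have "\<exists>y. Num / D = conv_ratio n p (2*p) y \<and> y \<in> vec_n n \<and> (\<exists>i<n. y i \<noteq> 0)"
      using xnz by metis
    thus ?thesis unfolding CS_def by (simp only: mem_Collect_eq)
  qed
  have bdd: "bdd_below CS"
  proof (rule bdd_belowI)
    fix r assume "r \<in> CS"
    then obtain y where "r = conv_ratio n p (2*p) y" unfolding CS_def by blast
    thus "0 \<le> r" unfolding conv_ratio_def by (simp add: sum_nonneg divide_nonneg_nonneg)
  qed
  have cle: "c \<le> Num / D" unfolding cCS by (rule cInf_lower[OF inCS bdd])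
  have c0: "c \<ge> 0" unfolding cCS
  proof (rule cInf_greatest)
    show "CS \<noteq> {}" using inCS by blast
    fix r assume "r \<in> CS"
    then obtain y where "r = conv_ratio n p (2*p) y" unfolding CS_def by blast
    thus "0 \<le> r" unfolding conv_ratio_def by (simp add: sum_nonneg divide_nonneg_nonneg)
  qed
  have cD: "c * D \<le> Num" using cle D by (simp add: pos_le_divide_eq)
  have goal: "lam \<ge> c * lm"
  proof (cases "even m")
    case True
    have m: "m = 2*p" using True p_def by simp
    have NpK: "N = p*K" unfolding N_def K_def m by simp
    have "(\<Sum>i<n. x i * hankel_tensor_apply m n h x i) = (\<Sum>i<n. lam * \<bar>x i\<bar>^(2*p))"
    proof (rule sum.cong[OF refl])
      fix i assume "i \<in> {..<n}"
      hence "x i * hankel_tensor_apply m n h x i = lam * (x i * x i ^ (m-1))" using eqx by simp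
      also have "x i * x i ^ (m-1) = x i ^ m"
      proof -
        have "m = Suc (m-1)" using m2 by simp
        thus ?thesis by (metis power_Suc)
      qed
      also have "\<dots> = \<bar>x i\<bar>^(2*p)" using m by (simp add: power_even_abs)
      finally show "x i * hankel_tensor_apply m n h x i = lam * \<bar>x i\<bar>^(2*p)" .
    qed
    hence e1: "(\<Sum>i<n. x i * hankel_tensor_apply m n h x i) = lam * D"
      unfolding D_def by (simp add: sum_distrib_left)
    have nK: "{..<n} = {..K}" using n1 K_def by auto
    have "(\<Sum>i<n. x i * hankel_tensor_apply m n h x i)
        = (\<Sum>i<n. x i * (\<Sum>k\<le>(m-1)*K. h (i+k) * conv_pow x (m-1) k))"
      by (rule sum.cong[OF refl]) (simp only: apply_conv[OF xz n1] K_def)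
    also have "\<dots> = (\<Sum>i\<le>K. x i * (\<Sum>k\<le>(m-1)*K. h (i+k) * conv_pow x (m-1) k))"
      by (simp only: nK)
    also have "\<dots> = (\<Sum>k\<le>K + (m-1)*K. h k * conv x (conv_pow x (m-1)) k)"
      by (rule conv_sum[symmetric]) (auto intro: xK cp_supp[OF xK])
    also have "\<dots> = (\<Sum>k\<le>(p+p)*K. h k * conv_pow x (p+p) k)"
    proof -
      have "K + (m-1)*K = (p+p)*K" using m p1 by (simp add: algebra_simps)
      moreover have "conv x (conv_pow x (m-1)) = conv_pow x (p+p)"
        using cp_Suc[of x "m-1"] m p1 by (simp add: mult_2)
      ultimately show ?thesis by simp
    qed
    also have "\<dots> = (\<Sum>a\<le>p*K. z a * (\<Sum>b\<le>p*K. h (a+b) * z b))"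
      unfolding z_def by (rule cp_add[OF xK])
    also have "\<dots> = Qf N A z" unfolding Qf_def NpK A_def hankel_matrix_def
    proof (rule sum.cong[OF refl])
      fix a show "z a * (\<Sum>b\<le>p*K. h (a+b) * z b) = (\<Sum>b\<le>p*K. z a * h (a+b) * z b)"
        by (simp add: sum_distrib_left mult.assoc)
    qed
    finally have "lam * D = Qf N A z" using e1 by simp
    moreover have "nrm N z = Num" unfolding nrm_def NpK Num_def ..
    ultimately have "lam * D \<ge> lm * Num" using lmQ[of z] by simp
    moreover have "lm * Num \<ge> lm * (c * D)" using lm0 cD by (simp add: mult_left_mono)
    moreover have "lm * (c * D) = (c * lm) * D" by simp
    ultimately have "lam * D \<ge> (c * lm) * D" by linarith
    thus ?thesis using D by simp
  next
    case False
    have m: "m = 2*p+1" using False p_def by simp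
    have Kev: "even K" using ev False K_def by simp
    define r where "r = K div 2"
    have Kr: "K = 2*r" using Kev r_def by simp
    have "N = (2*p+1)*(2*r) div 2" unfolding N_def m using Kr K_def by simp
    also have "\<dots> = (2*p+1)*r" by simp
    also have "\<dots> = p*K + r" using Kr by (simp add: algebra_simps)
    finally have N: "N = p*K + r" .
    have zs: "\<And>i. i > p*K \<Longrightarrow> z i = 0" unfolding z_def by (rule cp_supp[OF xK])
    have kN: "p*K + k \<le> N" if "k \<le> r" for k using N that by linarith
    have kN': "p*(n-1) + k \<le> N" if "k \<le> r" for k using kN[OF that] K_def by simp
    have nrmS: "nrm N (shift k z) = Num" if "k \<le> r" for k
      unfolding Num_def by (rule nrm_shift[OF zs kN[OF that]])
    have ash: "hankel_tensor_apply m n h x (k1+k2)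
         = (\<Sum>a\<le>N. \<Sum>b\<le>N. shift k1 z a * A a b * shift k2 z b)" if "k1 \<le> r" "k2 \<le> r" for k1 k2
      unfolding m z_def A_def by (rule apply_shift[OF xz n1 kN'[OF that(1)] kN'[OF that(2)]])
    have Qsh: "hankel_tensor_apply m n h x (k+k) = Qf N A (shift k z)" if "k \<le> r" for k
      unfolding Qf_def using ash[OF that that] .
    show ?thesis
    proof (cases "\<exists>i<n. even i \<and> x i \<noteq> 0")
      case True
      then obtain i where i: "i < n" "even i" "x i \<noteq> 0" by blast
      define k where "k = i div 2"
      have ik: "i = k + k" using i(2) k_def by presburger
      have kr: "k \<le> r" using i(1) ik Kr K_def by simp
      have "lam * x i ^ (2*p) = Qf N A (shift k z)" using eqx[OF i(1)] Qsh[OF kr] ik m by simp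
      also have "\<dots> \<ge> lm * Num" using lmQ[of "shift k z"] nrmS[OF kr] by simp
      finally have a: "lam * x i ^ (2*p) \<ge> lm * Num" .
      have "lm * Num \<ge> lm * (c * D)" using lm0 cD by (simp add: mult_left_mono)
      moreover have "D \<ge> \<bar>x i\<bar>^(2*p)" unfolding D_def
        using member_le_sum[of i "{..<n}" "\<lambda>i. \<bar>x i\<bar>^(2*p)"] i(1) by simp
      moreover have "lm * c \<ge> 0" using lm0 c0 by simp
      ultimately have "lm * Num \<ge> (c * lm) * \<bar>x i\<bar>^(2*p)"
      proof -
        assume a1: "lm * Num \<ge> lm * (c * D)" and a2: "D \<ge> \<bar>x i\<bar>^(2*p)" and a3: "lm * c \<ge> 0"
        have "(lm * c) * \<bar>x i\<bar>^(2*p) \<le> (lm * c) * D" using mult_left_mono[OF a2 a3] .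
        moreover have "lm * (c * D) = (lm * c) * D" by simp
        moreover have "(c * lm) * \<bar>x i\<bar>^(2*p) = (lm * c) * \<bar>x i\<bar>^(2*p)" by simp
        ultimately show ?thesis using a1 by linarith
      qed
      moreover have "x i ^ (2*p) = \<bar>x i\<bar>^(2*p)" by (simp add: power_even_abs)
      ultimately have "lam * \<bar>x i\<bar>^(2*p) \<ge> (c * lm) * \<bar>x i\<bar>^(2*p)" using a by simp
      moreover have "\<bar>x i\<bar>^(2*p) > 0" using i(3) by simp
      ultimately show ?thesis by simp
    next
      case False
      obtain i where i: "i < n" "x i \<noteq> 0" using xnz by blast
      have oi: "odd i" using False i by blast
      define k where "k = i div 2"
      have ik: "i = (k+1) + k" using oi k_def by presburger
      have kr: "k + 1 \<le> r" using i(1) ik Kr K_def oi by simp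
      have kn: "k + k < n" using ik i(1) by linarith
      have xk: "x (k+k) = 0" using False kn by auto
      have kr0: "k \<le> r" using kr by simp
      have "Qf N A (shift k z) = hankel_tensor_apply m n h x (k+k)" using Qsh[OF kr0] by simp
      also have "\<dots> = lam * x (k+k) ^ (m-1)" using eqx[OF kn] .
      also have "\<dots> = 0" using xk m p1 by simp
      finally have Q0: "Qf N A (shift k z) = 0" .
      from Q0 have ker: "(\<Sum>a\<le>N. \<Sum>b\<le>N. shift (k+1) z a * A a b * shift k z b) = 0"
        by (rule psd_kernel[where A=A and N=N, OF sym psdQ])
      have "lam * x i ^ (m-1) = hankel_tensor_apply m n h x ((k+1)+k)" using eqx[OF i(1)] ik by simp
      also have "\<dots> = 0" using ash[OF kr kr0] ker by simp
      finally have "lam * x i ^ (m-1) = 0" .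
      hence lam0: "lam = 0" using i(2) by simp
      show ?thesis
      proof (cases "lm = 0")
        case True thus ?thesis using lam0 by simp
      next
        case False
        hence lmp: "lm > 0" using lm0 by simp
        have "0 \<ge> lm * Num" using lmQ[of "shift k z"] nrmS[OF kr0] Q0 by simp
        hence "Num \<le> 0" using lmp by (simp add: mult_le_0_iff)
        hence "c * D \<le> 0" using cD by simp
        hence "c \<le> 0" using D by (simp add: mult_le_0_iff)
        hence "c = 0" using c0 by simp
        thus ?thesis using lam0 by simp
      qed
    qed
  qed
  thus ?thesis unfolding c_def lm_def N_def A_def .
qed


lemma neg_eigs: "mat_eigenvalues N (\<lambda>i j. - A i j) = uminus ` mat_eigenvalues N A"
proof -
  have "\<mu> \<in> mat_eigenvalues N (\<lambda>i j. - A i j) \<longleftrightarrow> -\<mu> \<in> mat_eigenvalues N A" for \<mu>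
  proof -
    have e: "((\<Sum>j\<le>N. - A i j * v j) = \<mu> * v i) \<longleftrightarrow> ((\<Sum>j\<le>N. A i j * v j) = -\<mu> * v i)" for v i
      by (auto simp: sum_negf)
    show ?thesis unfolding mat_eigenvalues_def mem_Collect_eq e ..
  qed
  hence "mat_eigenvalues N (\<lambda>i j. - A i j) = {\<mu>. -\<mu> \<in> mat_eigenvalues N A}" by auto
  also have "\<dots> = uminus ` mat_eigenvalues N A" by (auto simp: image_iff) (metis minus_minus)
  finally show ?thesis .
qed

lemma lmax_neg:
  assumes sym: "\<And>i j. A i j = A j i"
  shows "lambda_max N A = - lambda_min N (\<lambda>i j. - A i j)"
proof -
  let ?S = "mat_eigenvalues N A"
  have fin: "finite ?S" by (rule eig_finite)
  have ne: "?S \<noteq> {}" using lmin_facts[where A=A and N=N, OF sym] by blast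
  have "lambda_min N (\<lambda>i j. - A i j) = Min (uminus ` ?S)" unfolding lambda_min_def neg_eigs ..
  also have "\<dots> = - Max ?S"
  proof (rule Min_eqI)
    show "finite (uminus ` ?S)" using fin by simp
    show "- Max ?S \<in> uminus ` ?S" using Max_in[OF fin ne] by blast
    fix y assume "y \<in> uminus ` ?S"
    then obtain t where "t \<in> ?S" "y = -t" by blast
    thus "- Max ?S \<le> y" using Max_ge[OF fin] by simp
  qed
  finally show ?thesis unfolding lambda_max_def by simp
qed

theorem theorem6:
  fixes m n :: nat and h :: "nat \<Rightarrow> real"
  assumes "m \<ge> 2" and "n \<ge> 1" and "even (m * (n - 1))"
  shows "(mat_psd (m * (n - 1) div 2) (hankel_matrix h) \<longrightarrow>
            (\<forall>lam. is_H_eigenvalue m n h lam \<longrightarrow>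
               lam \<ge> const_c m n * lambda_min (m * (n - 1) div 2) (hankel_matrix h)))
       \<and> (mat_nsd (m * (n - 1) div 2) (hankel_matrix h) \<longrightarrow>
            (\<forall>lam. is_H_eigenvalue m n h lam \<longrightarrow>
               lam \<le> const_c m n * lambda_max (m * (n - 1) div 2) (hankel_matrix h)))"
proof (intro conjI impI allI)
  fix lam
  assume "mat_psd (m * (n - 1) div 2) (hankel_matrix h)" "is_H_eigenvalue m n h lam"
  thus "lam \<ge> const_c m n * lambda_min (m * (n - 1) div 2) (hankel_matrix h)"
    using psd_part assms by blast
next
  fix lam
  assume nsd: "mat_nsd (m * (n - 1) div 2) (hankel_matrix h)" and eig: "is_H_eigenvalue m n h lam"
  define N where "N = m * (n - 1) div 2"
  define h' where "h' = (\<lambda>k. - h k)"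
  have hm: "hankel_matrix h' = (\<lambda>i j. - hankel_matrix h i j)"
    by (rule ext, rule ext) (simp add: h'_def hankel_matrix_def)
  have psd': "mat_psd N (hankel_matrix h')" using nsd unfolding mat_psd_def mat_nsd_def hm N_def
    by (simp add: sum_negf)
  have app: "hankel_tensor_apply m n h' x i = - hankel_tensor_apply m n h x i" for x i
    unfolding hankel_tensor_apply_def h'_def by (simp add: sum_negf)
  have eig': "is_H_eigenvalue m n h' (-lam)" using eig unfolding is_H_eigenvalue_def app by auto
  have "-lam \<ge> const_c m n * lambda_min N (hankel_matrix h')"
    using psd_part[OF assms psd'[unfolded N_def] eig'] N_def by simp
  moreover have "lambda_max N (hankel_matrix h) = - lambda_min N (hankel_matrix h')"
    unfolding hm by (rule lmax_neg) (simp add: hankel_matrix_def add.commute)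
  ultimately show "lam \<le> const_c m n * lambda_max (m * (n - 1) div 2) (hankel_matrix h)"
    unfolding N_def by simp
qed


end
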